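(* For every integer $n\ge 0$, $c_5(n)$ is odd if $n=(7j^2+j)/2$ for some $j\in\mathbb{Z}$, and $c_5(n)$ is even otherwise.
   Context: A partition of $n\ge 0$ is a finite multiset of positive integers summing to $n$; the empty partition is the partition of $0$. For $n\ge 0$, $c_5(n)$ denotes the number of partitions $\lambda$ of $n$ such that either (a) all parts of $\lambda$ are even and distinct, or (b) there is an integer $j\ge 1$ such that the set of odd parts of $\lambda$ is exactly $\{1,3,\dots,2j-1\}$, each of these appearing exactly two or three times, and the even parts of $\lambda$ are distinct and each at least $4j+2$ (i.e. at least twice the largest odd part plus $4$). *)

theory Defs
  imports Main "HOL-Library.Multiset"
begin

definition is_partition :: "nat \<Rightarrow> nat multiset \<Rightarrow> bool" where
  "is_partition n M \<longleftrightarrow> (\<forall>x\<in>#M. 0 < x) \<and> sum_mset M = n"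

definition c5_condA :: "nat multiset \<Rightarrow> bool" where
  "c5_condA M \<longleftrightarrow> (\<forall>x\<in>#M. even x) \<and> (\<forall>x. count M x \<le> 1)"

definition c5_condB :: "nat multiset \<Rightarrow> bool" where
  "c5_condB M \<longleftrightarrow> (\<exists>j::nat. 1 \<le> j \<and>
      {x \<in> set_mset M. odd x} = {2*i - 1 | i. 1 \<le> i \<and> i \<le> j} \<and>
      (\<forall>x\<in>#M. odd x \<longrightarrow> count M x = 2 \<or> count M x = 3) \<and>
      (\<forall>x\<in>#M. even x \<longrightarrow> count M x = 1 \<and> 4*j + 2 \<le> x))"

definition c5 :: "nat \<Rightarrow> nat" where
  "c5 n = card {M. is_partition n M \<and> (c5_condA M \<or> c5_condB M)}"

end

theory Submission
  imports Defs "HOL-Library.Groups_Big_Fun" "HOL-Computational_Algebra.Formal_Power_Series" "HOL-Library.Z2"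
begin


definition poch :: "'a::comm_ring_1 \<Rightarrow> 'a \<Rightarrow> nat \<Rightarrow> 'a" where
  "poch q a n = (\<Prod>i<n. 1 - a * q^i)"

lemma poch_0[simp]: "poch q a 0 = 1" by (simp add: poch_def)
lemma poch_Suc: "poch q a (Suc n) = poch q a n * (1 - a * q^n)"
  by (simp add: poch_def)

lemma poch_add: "poch q a (m + n) = poch q a m * poch q (a * q^m) n"
  by (induction n) (simp_all add: poch_Suc power_add algebra_simps)

fun qbin :: "'a::comm_ring_1 \<Rightarrow> nat \<Rightarrow> nat \<Rightarrow> 'a" where
  "qbin p n 0 = 1"
| "qbin p 0 (Suc k) = 0"
| "qbin p (Suc n) (Suc k) = qbin p n k + p^(Suc k) * qbin p n (Suc k)"

lemma qbin_gt: "n < k \<Longrightarrow> qbin p n k = 0"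
proof (induction n arbitrary: k)
  case 0 then show ?case by (cases k) auto
next
  case (Suc n) then show ?case by (cases k) auto
qed

lemma qbin_same[simp]: "qbin p n n = 1"
  by (induction n) (auto simp: qbin_gt)

abbreviation P :: "'a::comm_ring_1 \<Rightarrow> nat \<Rightarrow> 'a" where "P p n \<equiv> poch p p n"

lemma P_Suc: "P p (Suc n) = P p n * (1 - p^Suc n)"
  by (simp add: poch_Suc)

lemma qbin_prod: "k \<le> n \<Longrightarrow> qbin p n k * P p k * P p (n-k) = P p n"
proof (induction n arbitrary: k)
  case 0 then show ?case by simp
next
  case (Suc n)
  show ?case
  proof (cases k)
    case 0 then show ?thesis by simp
  next
    case (Suc k')
    have t1: "qbin p n k' * P p (Suc k') * P p (n - k') = P p n * (1 - p^Suc k')"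
      using Suc.IH[of k'] Suc.prems Suc by (simp add: P_Suc algebra_simps)
    show ?thesis
    proof (cases "k' = n")
      case True
      then show ?thesis using t1 Suc by (simp add: qbin_gt P_Suc)
    next
      case False
      then have kn: "Suc k' \<le> n" using Suc.prems Suc by simp
      have e: "n - k' = Suc (n - Suc k')" using kn by simp
      have t2: "qbin p n (Suc k') * P p (Suc k') * P p (n - k') = P p n * (1 - p^(n-k'))"
      proof -
        have "P p (n - k') = P p (n - Suc k') * (1 - p^(n-k'))"
          by (simp only: e P_Suc)
        then show ?thesis using Suc.IH[OF kn]
          by (metis mult.assoc)
      qed
      have ee: "Suc k' + (n - k') = Suc n" using kn by simp
      have pw: "p^Suc k' * p^(n-k') = p^Suc n" by (metis ee power_add)
      have "qbin p (Suc n) k * P p k * P p (Suc n - k)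
         = qbin p n k' * P p (Suc k') * P p (n - k') + p^Suc k' * (qbin p n (Suc k') * P p (Suc k') * P p (n - k'))"
        using Suc by (simp add: algebra_simps)
      also have "\<dots> = P p n * (1 - p^Suc k') + p^Suc k' * (P p n * (1 - p^(n-k')))"
        using t1 t2 by simp
      also have "\<dots> = P p n * (1 - p^Suc k' * p^(n-k'))"
        by (simp add: algebra_simps)
      also have "\<dots> = P p (Suc n)" by (simp only: pw P_Suc)
      finally show ?thesis .
    qed
  qed
qed


lemma poch_Suc_left: "poch q a (Suc n) = (1 - a) * poch q (a*q) n"
  using poch_add[of q a 1 n] by (simp add: poch_def)

definition dur :: "'a::comm_ring_1 \<Rightarrow> 'a \<Rightarrow> nat \<Rightarrow> 'a" where
  "dur q z n = (\<Sum>m\<le>n. z^m * q^(m^2) * qbin q n m * poch q (z*q^(Suc m)) (n-m))"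

lemma dur_Suc: "dur q z (Suc n) = dur q (z*q) n"
proof -
  define A where "A m = z^m * q^(m^2+m) * qbin q n m * poch q (z*q^(m+2)) (n-m)" for m
  define B where "B m = z^(m+1) * q^((m+1)^2) * qbin q n m * poch q (z*q^(m+2)) (n-m)" for m
  define f where "f m = z^m * q^(m^2) * qbin q (Suc n) m * poch q (z*q^(Suc m)) (Suc n-m)" for m
  have f0: "f 0 = A 0 - B 0"
    unfolding f_def A_def B_def by (simp add: poch_Suc_left algebra_simps power2_eq_square)
  have fS: "f (Suc m) = B m + (A (Suc m) - B (Suc m))" if "m \<le> n" for m
  proof (cases "m = n")
    case True
    then show ?thesis unfolding f_def A_def B_def by (simp add: qbin_gt)
  next
    case False
    then have e: "n - m = Suc (n - Suc m)" using that by simp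
    define C where "C = poch q (z*q^(Suc m+2)) (n - Suc m)"
    have pp: "poch q (z*q^(m+2)) (n-m) = (1 - z*q^(m+2)) * C"
    proof -
      have "z*q^(m+2)*q = z*q^(Suc m+2)" by (simp add: mult.assoc)
      then show ?thesis unfolding C_def by (simp only: e poch_Suc_left)
    qed
    have a: "A (Suc m) = z^(m+1)*q^((m+1)^2+m+1)*qbin q n (m+1) * C" unfolding A_def C_def by simp
    have b: "B (Suc m) = z^(m+2)*q^((m+2)^2)*qbin q n (m+1) * C" unfolding B_def C_def by simp
    have "f (Suc m) = B m + z^(m+1) * q^((m+1)^2+m+1) * qbin q n (m+1) * poch q (z*q^(m+2)) (n-m)"
      unfolding f_def B_def by (simp add: algebra_simps power_add power2_eq_square)
    also have "z^(m+1) * q^((m+1)^2+m+1) * qbin q n (m+1) * poch q (z*q^(m+2)) (n-m)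
       = A (Suc m) - B (Suc m)"
      unfolding a b pp
      by (simp add: algebra_simps power_add power2_eq_square)
    finally show ?thesis .
  qed
  have "dur q z (Suc n) = (\<Sum>m\<le>Suc n. f m)" unfolding dur_def f_def by simp
  also have "\<dots> = f 0 + (\<Sum>m\<le>n. f (Suc m))" by (rule sum.atMost_Suc_shift)
  also have "(\<Sum>m\<le>n. f (Suc m)) = (\<Sum>m\<le>n. A (Suc m)) + (\<Sum>m\<le>n. B m - B (Suc m))"
    by (simp add: fS sum.distrib[symmetric] sum_subtractf[symmetric] algebra_simps)
  also have "(\<Sum>m\<le>n. B m - B (Suc m)) = B 0 - B (Suc n)" by (rule sum_telescope)
  also have "B (Suc n) = 0" unfolding B_def by (simp add: qbin_gt)
  also have "f 0 + ((\<Sum>m\<le>n. A (Suc m)) + (B 0 - 0)) = A 0 + (\<Sum>m\<le>n. A (Suc m))"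
    using f0 by simp
  also have "\<dots> = (\<Sum>m\<le>Suc n. A m)" by (rule sum.atMost_Suc_shift[symmetric])
  also have "\<dots> = (\<Sum>m\<le>n. A m)" unfolding A_def by (simp add: qbin_gt)
  also have "\<dots> = dur q (z*q) n" unfolding dur_def A_def
    by (intro sum.cong) (simp_all add: algebra_simps power_add power2_eq_square)
  finally show ?thesis .
qed

lemma dur_eq_1: "dur q z n = 1"
proof (induction n arbitrary: z)
  case 0 then show ?case by (simp add: dur_def)
next
  case (Suc n) then show ?case by (simp add: dur_Suc)
qed


lemma qbin_cancel:
  fixes p x :: "'a::idom"
  assumes nz: "\<And>k. P p k \<noteq> 0" and kn: "k \<le> n" and h: "x * P p k * P p (n-k) = P p n"
  shows "x = qbin p n k"
proof -
  have "x * (P p k * P p (n-k)) = qbin p n k * (P p k * P p (n-k))"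
    using h qbin_prod[OF kn, of p] by (simp add: mult.assoc)
  moreover have "P p k * P p (n-k) \<noteq> 0" using nz by simp
  ultimately show ?thesis by simp
qed

lemma qbin_sym:
  fixes p :: "'a::idom"
  assumes nz: "\<And>k. P p k \<noteq> 0" and kn: "k \<le> n"
  shows "qbin p n (n-k) = qbin p n k"
proof -
  have "qbin p n (n-k) * P p k * P p (n-k) = P p n"
    using qbin_prod[of "n-k" n p] kn by (simp add: algebra_simps)
  then show ?thesis using qbin_cancel[OF nz kn] by blast
qed

lemma qbin_pascal2:
  fixes p :: "'a::idom"
  assumes nz: "\<And>k. P p k \<noteq> 0" and kn: "k \<le> n"
  shows "qbin p (Suc n) (Suc k) = p^(n-k) * qbin p n k + qbin p n (Suc k)"
proof (cases "k = n")
  case True then show ?thesis by (simp add: qbin_gt)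
next
  case False
  then have kn': "Suc k \<le> n" using kn by simp
  have e: "n - k = Suc (n - Suc k)" using kn' by simp
  have h1: "qbin p n k * P p (Suc k) * P p (n-k) = P p n * (1 - p^Suc k)"
    using qbin_prod[OF kn, of p] by (simp add: P_Suc algebra_simps)
  have h2: "qbin p n (Suc k) * P p (Suc k) * P p (n-k) = P p n * (1 - p^(n-k))"
  proof -
    have "P p (n - k) = P p (n - Suc k) * (1 - p^(n-k))"
      by (simp only: e P_Suc)
    then show ?thesis using qbin_prod[OF kn', of p] by (metis mult.assoc)
  qed
  have ee: "(n - k) + Suc k = Suc n" using kn by simp
  have pw: "p^(n-k) * p^Suc k = p^Suc n" by (metis ee power_add)
  have "(p^(n-k) * qbin p n k + qbin p n (Suc k)) * P p (Suc k) * P p (Suc n - Suc k)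
      = p^(n-k) * (qbin p n k * P p (Suc k) * P p (n-k)) + qbin p n (Suc k) * P p (Suc k) * P p (n-k)"
    by (simp add: algebra_simps)
  also have "\<dots> = P p n * (1 - p^(n-k) * p^Suc k)" unfolding h1 h2 by (simp add: algebra_simps)
  also have "\<dots> = P p (Suc n)" by (simp only: pw P_Suc)
  finally show ?thesis using qbin_cancel[OF nz, of "Suc k" "Suc n"] kn by simp
qed

definition Bz :: "'a::comm_ring_1 \<Rightarrow> nat \<Rightarrow> int \<Rightarrow> 'a" where
  "Bz p m k = (if k < 0 then 0 else qbin p m (nat k))"

lemma Bz_nz: "Bz p m k \<noteq> 0 \<Longrightarrow> 0 \<le> k \<and> k \<le> int m"
proof -
  assume a: "Bz p m k \<noteq> 0"
  then have k: "0 \<le> k" by (auto simp: Bz_def split: if_splits)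
  with a have "qbin p m (nat k) \<noteq> 0" by (simp add: Bz_def)
  then have "nat k \<le> m" by (metis not_le qbin_gt)
  with k show ?thesis by linarith
qed

lemma Bz_pascal1: "Bz p (Suc m) k = Bz p m (k-1) + p^(nat k) * Bz p m k"
proof (cases "k < 0")
  case True then show ?thesis by (simp add: Bz_def)
next
  case False
  then obtain j where k: "k = int j" by (metis nonneg_int_cases not_less)
  show ?thesis
  proof (cases j)
    case 0 then show ?thesis using k by (simp add: Bz_def)
  next
    case (Suc j')
    then have nk: "nat k = Suc j'" "nat (k - 1) = j'" "\<not> k < 0" "\<not> k - 1 < 0" using k by simp_all
    then show ?thesis by (simp add: Bz_def)
  qed
qed

lemma Bz_pascal2:
  fixes p :: "'a::idom"
  assumes nz: "\<And>k. P p k \<noteq> 0"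
  shows "Bz p (Suc m) k = p^(nat (int m + 1 - k)) * Bz p m (k-1) + Bz p m k"
proof (cases "k < 0")
  case True then show ?thesis by (simp add: Bz_def)
next
  case False
  then obtain j where k: "k = int j" by (metis nonneg_int_cases not_less)
  show ?thesis
  proof (cases j)
    case 0 then show ?thesis using k by (simp add: Bz_def)
  next
    case (Suc j')
    show ?thesis
    proof (cases "j' \<le> m")
      case True
      have "nat (int m + 1 - k) = m - j'" using k Suc True by simp
      moreover have "nat k = Suc j'" "nat (k - 1) = j'" using k Suc by simp_all
      ultimately show ?thesis using k Suc qbin_pascal2[OF nz True] by (simp add: Bz_def)
    next
      case False
      then show ?thesis using k Suc by (simp add: Bz_def qbin_gt)
    qed
  qed
qed

lemma Bz_sym:
  fixes p :: "'a::idom"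
  assumes nz: "\<And>k. P p k \<noteq> 0"
  shows "Bz p m (int m - k) = Bz p m k"
proof (cases "0 \<le> k \<and> k \<le> int m")
  case True
  then obtain j where k: "k = int j" "j \<le> m" by (metis nonneg_int_cases of_nat_le_iff)
  have "nat (int m - int j) = m - j" using k by simp
  then show ?thesis using k qbin_sym[OF nz k(2)] by (simp add: Bz_def)
next
  case False
  then show ?thesis by (auto simp: Bz_def qbin_gt)
qed

lemma finite_supp_int:
  assumes "\<And>r. g r \<noteq> 0 \<Longrightarrow> a \<le> r \<and> r \<le> (b::int)"
  shows "finite {r. g r \<noteq> 0}"
  by (rule finite_subset[of _ "{a..b}"]) (auto dest: assms)

lemma Sum_any_pair_zero:
  fixes f :: "int \<Rightarrow> 'a::comm_ring_1"
  assumes two: "(2::'a) = 0" and fin: "finite {r. f r \<noteq> 0}"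
    and sym: "\<And>r. f (-1-r) = f r"
  shows "Sum_any f = 0"
proof -
  define g where "g r = (if 0 \<le> r then f r else 0)" for r
  define h where "h r = (if r < 0 then f r else 0)" for r
  have fg: "finite {r. g r \<noteq> 0}" by (rule finite_subset[OF _ fin]) (auto simp: g_def)
  have fh: "finite {r. h r \<noteq> 0}" by (rule finite_subset[OF _ fin]) (auto simp: h_def)
  have "Sum_any f = Sum_any (\<lambda>r. g r + h r)"
    by (rule Sum_any.cong) (simp add: g_def h_def)
  also have "\<dots> = Sum_any g + Sum_any h" by (rule Sum_any.distrib[OF fg fh])
  also have "Sum_any h = Sum_any g"
  proof (rule Sum_any.reindex_cong[of "\<lambda>r. -1-r"])
    show "bij (\<lambda>r::int. -1-r)"
      by (rule bij_betw_byWitness[of _ "\<lambda>r. -1-r"]) auto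
    show "h \<circ> (\<lambda>r. -1-r) = g"
      by (rule ext) (auto simp: h_def g_def sym)
  qed
  also have "Sum_any g + Sum_any g = 2 * Sum_any g" by simp
  also have "\<dots> = 0" using two by simp
  finally show ?thesis .
qed


definition E :: "int \<Rightarrow> int" where "E r = r*(3*r-1) div 2"

lemma E2: "2 * E r = r*(3*r-1)"
proof -
  have "even (r*(3*r-1))" by (cases "even r") auto
  then show ?thesis unfolding E_def by simp
qed

lemma E_nonneg: "0 \<le> E r"
proof -
  have "0 \<le> r*(3*r-1)"
  proof (cases "r \<ge> 1")
    case True then show ?thesis by simp
  next
    case False then have "r \<le> 0" by simp
    then show ?thesis by (simp add: mult_nonpos_nonpos)
  qed
  then show ?thesis using E2[of r] by linarith
qed

lemma E_m1: "E (-1-r) = E r + 4*r + 2"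
proof -
  have "2 * E (-1-r) = 2 * (E r + 4*r + 2)"
    unfolding distrib_left E2 by (simp add: algebra_simps)
  then show ?thesis by simp
qed

lemma E_p1: "E (r+1) = E r + 3*r + 1"
proof -
  have "2 * E (r+1) = 2 * (E r + 3*r + 1)"
    unfolding distrib_left E2 by (simp add: algebra_simps)
  then show ?thesis by simp
qed

lemma E_neg: "E (-r) = E r + r"
proof -
  have "2 * E (-r) = 2 * (E r + r)"
    unfolding distrib_left E2 by (simp add: algebra_simps)
  then show ?thesis by simp
qed

lemma qpow: "0 \<le> a \<Longrightarrow> 0 \<le> b \<Longrightarrow> (q::'a::comm_ring_1)^nat a * q^nat b = q^nat(a+b)"
  by (simp add: power_add[symmetric] nat_add_distrib)

lemma qpow2: "0 \<le> a \<Longrightarrow> ((q::'a::comm_ring_1)^2)^nat a = q^nat(2*a)"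
  by (simp add: power_mult[symmetric] nat_mult_distrib)

definition G :: "'a::comm_ring_1 \<Rightarrow> nat \<Rightarrow> int \<Rightarrow> 'a" where
  "G q m c = (\<Sum>r. q^nat(E r) * Bz (q^2) m (c - r))"

lemma fin_minusI:
  assumes "\<And>r. g r \<noteq> 0 \<Longrightarrow> Bz p m (c - r) \<noteq> 0"
  shows "finite {r. g r \<noteq> 0}"
proof (rule finite_supp_int[of _ "c - int m" c])
  fix r assume "g r \<noteq> 0"
  from Bz_nz[OF assms[OF this]] show "c - int m \<le> r \<and> r \<le> c" by linarith
qed

lemma fin_plusI:
  assumes "\<And>r. g r \<noteq> 0 \<Longrightarrow> Bz p m (c + r) \<noteq> 0"
  shows "finite {r. g r \<noteq> 0}"
proof (rule finite_supp_int[of _ "- c" "int m - c"])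
  fix r assume "g r \<noteq> 0"
  from Bz_nz[OF assms[OF this]] show "- c \<le> r \<and> r \<le> int m - c" by linarith
qed

lemma G_step1:
  fixes q :: "'a::idom"
  assumes two: "(2::'a) = 0" and nz: "\<And>k. P (q^2) k \<noteq> 0" and n: "1 \<le> n"
  shows "G q (2*n) (int n) = G q (2*n-1) (int n)"
proof -
  define m where "m = 2*n - 1"
  have sm: "2*n = Suc m" using n m_def by simp
  define W where "W r = q^nat(E r) * (q^2)^nat(int n + r) * Bz (q^2) m (int n - 1 - r)" for r
  have "G q (2*n) (int n) = (\<Sum>r. W r + q^nat(E r) * Bz (q^2) m (int n - r))"
  proof -
    have "int m + 1 - (int n - r) = int n + r" for r using sm by simp
    then show ?thesis unfolding G_def sm W_def
      by (intro Sum_any.cong) (simp add: Bz_pascal2[OF nz] algebra_simps)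
  qed
  also have "\<dots> = Sum_any W + G q m (int n)"
    unfolding G_def
    by (rule Sum_any.distrib; rule fin_minusI[where p="q^2" and m=m]) (auto simp: W_def)
  also have "Sum_any W = 0"
  proof (rule Sum_any_pair_zero[OF two])
    show "finite {r. W r \<noteq> 0}"
      by (rule fin_minusI[where p="q^2" and m=m and c="int n - 1"]) (auto simp: W_def)
    fix r
    have bs: "Bz (q^2) m (int n + r) = Bz (q^2) m (int n - 1 - r)"
    proof -
      have "int m - (int n + r) = int n - 1 - r" using sm by linarith
      then show ?thesis using Bz_sym[OF nz, of m "int n + r"] by metis
    qed
    show "W (-1-r) = W r"
    proof (cases "Bz (q^2) m (int n - 1 - r) = 0")
      case True then show ?thesis using bs by (simp add: W_def)
    next
      case False
      then have rr: "- int n \<le> r" "r \<le> int n - 1" using Bz_nz[OF False] sm by auto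
      have "q^nat(E (-1-r)) * (q^2)^nat(int n + (-1-r)) = q^nat(E r) * (q^2)^nat(int n + r)"
        using rr E_nonneg[of r] E_nonneg[of "-1-r"]
        by (simp add: qpow2 qpow E_m1 algebra_simps)
      then show ?thesis using bs by (simp add: W_def algebra_simps)
    qed
  qed
  finally show ?thesis by (simp add: m_def)
qed


lemma char2_neg: "(2::'a::comm_ring_1) = 0 \<Longrightarrow> - x = (x::'a)"
proof -
  assume "(2::'a) = 0"
  then have "x + x = 0" by (metis mult_2 mult_zero_left)
  then show ?thesis by (simp add: add_eq_0_iff2)
qed

lemma G_step2:
  fixes q :: "'a::idom"
  assumes two: "(2::'a) = 0" and nz: "\<And>k. P (q^2) k \<noteq> 0"
  shows "G q (Suc (2*n)) (int n + 1) = (1 - q*(q^2)^n) * G q (2*n) (int n)"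
proof -
  define m where "m = 2*n"
  define V where "V r = q^nat(E r) * (q^2)^nat(int n + 1 - r) * Bz (q^2) m (int n + 1 - r)" for r
  define V' where "V' s = q^nat(E (-s)) * Bz (q^2) m (int n - s)" for s
  have "G q (Suc m) (int n + 1) = (\<Sum>r. q^nat(E r) * Bz (q^2) m (int n - r) + V r)"
    unfolding G_def V_def
    by (intro Sum_any.cong) (simp add: Bz_pascal1 algebra_simps)
  also have "\<dots> = G q m (int n) + Sum_any V"
    unfolding G_def
    by (rule Sum_any.distrib; rule fin_minusI[where p="q^2" and m=m]) (auto simp: V_def)
  also have "Sum_any V = (\<Sum>s. V (s+1))"
    by (rule Sum_any.reindex_cong[of "\<lambda>s. s+1"])
       (auto intro: bij_betw_byWitness[of _ "\<lambda>s. s-1"])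
  also have "\<dots> = (\<Sum>s. q*(q^2)^n * V' s)"
  proof (rule Sum_any.cong)
    fix s
    show "V (s+1) = q*(q^2)^n * V' s"
    proof (cases "Bz (q^2) m (int n - s) = 0")
      case True then show ?thesis by (simp add: V_def V'_def)
    next
      case False
      then have ss: "s \<le> int n" using Bz_nz[OF False] by auto
      have "q^nat(E (s+1)) * (q^2)^nat(int n - s) = q*(q^2)^n * q^nat(E (-s))"
      proof -
        have "q^nat(E (s+1)) * (q^2)^nat(int n - s) = q^nat(E (s+1) + 2*(int n - s))"
          using ss E_nonneg[of "s+1"] by (simp add: qpow2 qpow)
        also have "E (s+1) + 2*(int n - s) = (2*int n + 1) + E (-s)"
          by (simp add: E_p1 E_neg)
        also have "q^nat((2*int n + 1) + E (-s)) = q^nat(2*int n + 1) * q^nat(E (-s))"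
          using E_nonneg[of "-s"] by (simp add: qpow)
        also have "q^nat(2*int n + 1) = q*(q^2)^n"
          by (simp add: nat_add_distrib nat_mult_distrib power_mult[symmetric])
        finally show ?thesis .
      qed
      then show ?thesis by (simp add: V_def V'_def algebra_simps)
    qed
  qed
  also have "\<dots> = q*(q^2)^n * Sum_any V'"
    by (rule Sum_any_right_distrib[symmetric]) (rule fin_minusI[where p="q^2" and m=m], auto simp: V'_def)
  also have "Sum_any V' = (\<Sum>t. V' (-t))"
    by (rule Sum_any.reindex_cong[of uminus])
       (auto intro: bij_betw_byWitness[of _ uminus])
  also have "\<dots> = G q m (int n)"
    unfolding G_def
  proof (rule Sum_any.cong)
    fix t
    have "Bz (q^2) m (int n + t) = Bz (q^2) m (int n - t)"
    proof -
      have "int m - (int n + t) = int n - t" using m_def by simp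
      then show ?thesis using Bz_sym[OF nz, of m "int n + t"] by metis
    qed
    then show "V' (-t) = q^nat(E t) * Bz (q^2) m (int n - t)" by (simp add: V'_def)
  qed
  finally have "G q (Suc m) (int n + 1) = G q m (int n) + q*(q^2)^n * G q m (int n)" .
  then show ?thesis unfolding m_def using char2_neg[OF two, of "q*(q^2)^n * G q (2*n) (int n)"]
    by (simp add: algebra_simps)
qed

lemma G_0: "G (q::'a::comm_ring_1) 0 0 = 1"
proof -
  have "G q 0 0 = (\<Sum>r::int. if r = 0 then (1::'a) else 0)"
    unfolding G_def by (rule Sum_any.cong) (auto simp: Bz_def E_def qbin_gt)
  also have "\<dots> = 1" by (simp add: Sum_any.expand_superset[of "{0}"])
  finally show ?thesis .
qed

theorem identity_I:
  fixes q :: "'a::idom"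
  assumes two: "(2::'a) = 0" and nz: "\<And>k. P (q^2) k \<noteq> 0"
  shows "G q (2*n) (int n) = poch (q^2) q n"
proof (induction n)
  case 0 then show ?case by (simp add: G_0)
next
  case (Suc n)
  have "G q (2 * Suc n) (int (Suc n)) = G q (2 * Suc n - 1) (int (Suc n))"
    by (rule G_step1[OF two nz]) simp
  also have "\<dots> = G q (Suc (2*n)) (int n + 1)" by (simp add: add.commute)
  also have "\<dots> = (1 - q*(q^2)^n) * G q (2*n) (int n)" by (rule G_step2[OF two nz])
  also have "\<dots> = poch (q^2) q (Suc n)" using Suc.IH by (simp add: poch_Suc algebra_simps)
  finally show ?case .
qed


lemma P_split: "P p a * poch p (p^Suc a) b = P p (a+b)"
  using poch_add[of p p a b] by simp

lemma cancel_nz: "a * D = b * D \<Longrightarrow> D \<noteq> 0 \<Longrightarrow> a = (b::'a::idom)"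
  by simp

definition XX :: "'a::comm_ring_1 \<Rightarrow> nat \<Rightarrow> nat \<Rightarrow> 'a" where
  "XX p N j = poch p (p^(2*j+1)) (2*N-2*j) * poch p (p^(N-j+1)) j"

definition YY :: "'a::comm_ring_1 \<Rightarrow> nat \<Rightarrow> nat \<Rightarrow> 'a" where
  "YY p N s = poch p (p^(N+s+1)) (N-s) * poch p (p^(N-s+1)) s"

lemma inner_term:
  fixes p :: "'a::idom"
  assumes nz: "\<And>k. P p k \<noteq> 0" and sm: "s + m \<le> N"
  shows "p^((s+m)^2) * qbin p (2*(s+m)) m * XX p N (s+m)
       = p^(s^2) * YY p N s * ((p^(2*s))^m * p^(m^2) * qbin p (N-s) m * poch p (p^(2*s)*p^(Suc m)) (N-s-m))"
proof (rule cancel_nz)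
  define j where "j = s+m"
  define n where "n = N - s"
  define D where "D = P p m * P p (2*s+m) * P p (n-m)"
  show "D \<noteq> 0" unfolding D_def using nz by simp
  have j1: "qbin p (2*j) m * P p m * P p (2*s+m) = P p (2*j)"
    using qbin_prod[of m "2*j" p] unfolding j_def by (simp add: algebra_simps)
  have j2: "P p (2*j) * poch p (p^(2*j+1)) (2*N-2*j) = P p (2*N)"
    using P_split[of p "2*j" "2*N-2*j"] sm unfolding j_def by simp
  have j3: "P p (n-m) * poch p (p^(N-j+1)) j = P p N"
    using P_split[of p "n-m" j] sm unfolding j_def n_def by (simp add: algebra_simps)
  have r1: "qbin p n m * P p m * P p (n-m) = P p n"
    using qbin_prod[of m n p] sm unfolding n_def by simp
  have r2: "P p (2*s+m) * poch p (p^(2*s)*p^(Suc m)) (n-m) = P p (N+s)"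
    using P_split[of p "2*s+m" "n-m"] sm unfolding n_def by (simp add: power_add[symmetric] algebra_simps)
  have r3: "P p (N+s) * poch p (p^(N+s+1)) (N-s) = P p (2*N)"
    using P_split[of p "N+s" "N-s"] sm by (simp add: mult_2)
  have r4: "P p n * poch p (p^(N-s+1)) s = P p N"
    using P_split[of p "n" s] sm unfolding n_def by simp
  have "p^((s+m)^2) * qbin p (2*(s+m)) m * XX p N (s+m) * D
      = p^(j^2) * (qbin p (2*j) m * P p m * P p (2*s+m)) * poch p (p^(2*j+1)) (2*N-2*j) * (P p (n-m) * poch p (p^(N-j+1)) j)"
    unfolding XX_def D_def j_def by (simp add: algebra_simps)
  also have "\<dots> = p^(j^2) * (P p (2*j) * poch p (p^(2*j+1)) (2*N-2*j)) * P p N" unfolding j1 j3 by (simp add: algebra_simps)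
  also have "\<dots> = p^(j^2) * P p (2*N) * P p N" unfolding j2 ..
  finally have L: "p^((s+m)^2) * qbin p (2*(s+m)) m * XX p N (s+m) * D = p^(j^2) * P p (2*N) * P p N" .
  have "p^(s^2) * YY p N s * ((p^(2*s))^m * p^(m^2) * qbin p (N-s) m * poch p (p^(2*s)*p^(Suc m)) (N-s-m)) * D
      = (p^(s^2) * (p^(2*s))^m * p^(m^2)) * (qbin p n m * P p m * P p (n-m)) * (P p (2*s+m) * poch p (p^(2*s)*p^(Suc m)) (n-m))
         * poch p (p^(N+s+1)) (N-s) * poch p (p^(N-s+1)) s"
    unfolding YY_def D_def n_def by (simp add: algebra_simps)
  also have "\<dots> = (p^(s^2) * (p^(2*s))^m * p^(m^2)) * (P p n * poch p (p^(N-s+1)) s) * (P p (N+s) * poch p (p^(N+s+1)) (N-s))"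
    unfolding r1 r2 by (simp add: algebra_simps)
  also have "\<dots> = p^(j^2) * P p (2*N) * P p N"
  proof -
    have "p^(s^2) * (p^(2*s))^m * p^(m^2) = p^(s^2 + 2*s*m + m^2)"
      by (simp add: power_add power_mult)
    also have "s^2 + 2*s*m + m^2 = j^2" unfolding j_def by (simp add: power2_sum)
    finally show ?thesis unfolding r3 r4 by (simp add: algebra_simps)
  qed
  finally show "p^((s+m)^2) * qbin p (2*(s+m)) m * XX p N (s+m) * D =
    p^(s^2) * YY p N s * ((p^(2*s))^m * p^(m^2) * qbin p (N-s) m * poch p (p^(2*s)*p^(Suc m)) (N-s-m)) * D"
    using L by simp
qed


lemma inner_s:
  fixes p :: "'a::idom"
  assumes nz: "\<And>k. P p k \<noteq> 0" and sN: "s \<le> N"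
  shows "(\<Sum>j\<le>N. p^(j^2) * Bz p (2*j) (int j - int s) * XX p N j) = p^(s^2) * YY p N s"
proof -
  define f where "f j = p^(j^2) * Bz p (2*j) (int j - int s) * XX p N j" for j
  have "(\<Sum>j\<le>N. f j) = (\<Sum>j\<in>{s..N}. f j)"
    by (rule sum.mono_neutral_right) (auto simp: f_def Bz_def)
  also have "{s..N} = {0+s..(N-s)+s}" using sN by simp
  also have "sum f \<dots> = (\<Sum>m\<in>{0..N-s}. f (m+s))" by (rule sum.shift_bounds_cl_nat_ivl)
  also have "\<dots> = (\<Sum>m\<le>N-s. p^(s^2) * YY p N s * ((p^(2*s))^m * p^(m^2) * qbin p (N-s) m * poch p (p^(2*s)*p^(Suc m)) (N-s-m)))"
  proof (rule sum.cong)
    show "{0..N-s} = {..N-s}" by auto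
    fix m assume "m \<in> {..N-s}"
    then have sm: "s + m \<le> N" using sN by auto
    have "f (m+s) = p^((s+m)^2) * qbin p (2*(s+m)) m * XX p N (s+m)"
      unfolding f_def Bz_def by (simp add: add.commute)
    then show "f (m+s) = p^(s^2) * YY p N s * ((p^(2*s))^m * p^(m^2) * qbin p (N-s) m * poch p (p^(2*s)*p^(Suc m)) (N-s-m))"
      using inner_term[OF nz sm] by simp
  qed
  also have "\<dots> = p^(s^2) * YY p N s * dur p (p^(2*s)) (N-s)"
    unfolding dur_def by (simp add: sum_distrib_left)
  also have "\<dots> = p^(s^2) * YY p N s" by (simp add: dur_eq_1)
  finally show ?thesis unfolding f_def .
qed

lemma inner_r:
  fixes p :: "'a::idom"
  assumes nz: "\<And>k. P p k \<noteq> 0" and rN: "\<bar>r\<bar> \<le> int N"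
  shows "(\<Sum>j\<le>N. p^(j^2) * Bz p (2*j) (int j - r) * XX p N j) = p^((nat \<bar>r\<bar>)^2) * YY p N (nat \<bar>r\<bar>)"
proof -
  have b: "Bz p (2*j) (int j - r) = Bz p (2*j) (int j - int (nat \<bar>r\<bar>))" for j
  proof (cases "0 \<le> r")
    case True then show ?thesis by simp
  next
    case False
    have "int (2*j) - (int j - r) = int j - int (nat \<bar>r\<bar>)" using False by simp
    then show ?thesis using Bz_sym[OF nz, of "2*j" "int j - r"] by metis
  qed
  have "nat \<bar>r\<bar> \<le> N" using rN by simp
  then show ?thesis unfolding b by (rule inner_s[OF nz])
qed

theorem finite_bailey:
  fixes q :: "'a::idom"
  assumes two: "(2::'a) = 0" and nz: "\<And>k. P (q^2) k \<noteq> 0"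
  shows "(\<Sum>j\<le>N. (q^2)^(j^2) * poch (q^2) q j * XX (q^2) N j)
       = (\<Sum>r\<in>{-int N..int N}. q^nat(E r) * ((q^2)^((nat \<bar>r\<bar>)^2) * YY (q^2) N (nat \<bar>r\<bar>)))"
proof -
  have pj: "poch (q^2) q j = (\<Sum>r\<in>{-int N..int N}. q^nat(E r) * Bz (q^2) (2*j) (int j - r))" if "j \<le> N" for j
  proof -
    have "poch (q^2) q j = G q (2*j) (int j)" using identity_I[OF two nz] by simp
    also have "\<dots> = (\<Sum>r\<in>{-int N..int N}. q^nat(E r) * Bz (q^2) (2*j) (int j - r))"
      unfolding G_def
    proof (rule Sum_any.expand_superset)
      show "finite {-int N..int N}" by simp
      show "{r. q^nat(E r) * Bz (q^2) (2*j) (int j - r) \<noteq> 0} \<subseteq> {-int N..int N}"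
      proof
        fix r assume "r \<in> {r. q^nat(E r) * Bz (q^2) (2*j) (int j - r) \<noteq> 0}"
        then have "Bz (q^2) (2*j) (int j - r) \<noteq> 0" by auto
        from Bz_nz[OF this] that show "r \<in> {-int N..int N}" by auto
      qed
    qed
    finally show ?thesis .
  qed
  have "(\<Sum>j\<le>N. (q^2)^(j^2) * poch (q^2) q j * XX (q^2) N j)
      = (\<Sum>j\<le>N. \<Sum>r\<in>{-int N..int N}. q^nat(E r) * ((q^2)^(j^2) * Bz (q^2) (2*j) (int j - r) * XX (q^2) N j))"
    by (rule sum.cong) (simp_all add: pj sum_distrib_left sum_distrib_right algebra_simps)
  also have "\<dots> = (\<Sum>r\<in>{-int N..int N}. \<Sum>j\<le>N. q^nat(E r) * ((q^2)^(j^2) * Bz (q^2) (2*j) (int j - r) * XX (q^2) N j))"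
    by (rule sum.swap)
  also have "\<dots> = (\<Sum>r\<in>{-int N..int N}. q^nat(E r) * ((q^2)^((nat \<bar>r\<bar>)^2) * YY (q^2) N (nat \<bar>r\<bar>)))"
  proof (rule sum.cong)
    fix r assume "r \<in> {-int N..int N}"
    then have "\<bar>r\<bar> \<le> int N" by auto
    then show "(\<Sum>j\<le>N. q^nat(E r) * ((q^2)^(j^2) * Bz (q^2) (2*j) (int j - r) * XX (q^2) N j))
       = q^nat(E r) * ((q^2)^((nat \<bar>r\<bar>)^2) * YY (q^2) N (nat \<bar>r\<bar>))"
      using inner_r[OF nz] by (simp add: sum_distrib_left[symmetric])
  qed simp
  finally show ?thesis .
qed


lemma two_bit_fps: "(2::bit fps) = 0"
  by (rule fps_ext) (simp add: fps_numeral_nth)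

lemma of_nat_bit: "(of_nat k :: bit) = (if odd k then 1 else 0)"
  by (induction k) auto

definition lowone :: "nat \<Rightarrow> 'a::comm_ring_1 fps \<Rightarrow> bool" where
  "lowone K F \<longleftrightarrow> fps_nth F 0 = 1 \<and> (\<forall>i. 0 < i \<and> i < K \<longrightarrow> fps_nth F i = 0)"

lemma lowone_mult:
  assumes "lowone K F" "lowone K H"
  shows "lowone K (F*H)"
  unfolding lowone_def
proof (intro conjI allI impI)
  show "fps_nth (F*H) 0 = 1" using assms by (simp add: lowone_def)
  fix i assume i: "0 < i \<and> i < K"
  have "fps_nth (F*H) i = (\<Sum>t=0..i. fps_nth F t * fps_nth H (i-t))" by (rule fps_mult_nth)
  also have "\<dots> = 0"
  proof (rule sum.neutral, rule ballI)
    fix t assume "t \<in> {0..i}"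
    show "fps_nth F t * fps_nth H (i-t) = 0"
    proof (cases "t = 0")
      case True then show ?thesis using assms i by (simp add: lowone_def)
    next
      case False then show ?thesis using assms i \<open>t \<in> {0..i}\<close> by (simp add: lowone_def)
    qed
  qed
  finally show "fps_nth (F*H) i = 0" .
qed

lemma lowone_factor: "K \<le> a \<Longrightarrow> 0 < a \<Longrightarrow> lowone K (1 - (fps_X::'a::comm_ring_1 fps)^a)"
  unfolding lowone_def by auto

lemma poch_X: "poch ((fps_X::'a::comm_ring_1 fps)^2) (fps_X^k) n = (\<Prod>i<n. 1 - fps_X^(k+2*i))"
  unfolding poch_def by (simp add: power_mult[symmetric] power_add)

lemma lowone_poch: "K \<le> k \<Longrightarrow> 0 < k \<Longrightarrow> lowone K (poch ((fps_X::'a::comm_ring_1 fps)^2) (fps_X^k) n)"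
proof (induction n)
  case 0 then show ?case by (simp add: lowone_def)
next
  case (Suc n)
  have "lowone K (1 - (fps_X::'a fps)^(k+2*n))" using Suc.prems by (intro lowone_factor) auto
  then show ?case using Suc by (simp add: poch_X lowone_mult)
qed

lemma lowone_coeff: "lowone (Suc n) F \<Longrightarrow> fps_nth (A*F) n = fps_nth A n"
proof -
  assume l: "lowone (Suc n) F"
  have "fps_nth (A*F) n = (\<Sum>i=0..n. fps_nth A i * fps_nth F (n-i))" by (rule fps_mult_nth)
  also have "\<dots> = (\<Sum>i\<in>{n}. fps_nth A i * fps_nth F (n-i))"
    by (rule sum.mono_neutral_right) (use l in \<open>auto simp: lowone_def\<close>)
  also have "\<dots> = fps_nth A n" using l by (simp add: lowone_def)
  finally show ?thesis .
qed

lemma P_X_nz: "P ((fps_X::'a::{comm_ring_1} fps)^2) k \<noteq> 0"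
proof -
  have "lowone 1 (poch ((fps_X::'a fps)^2) ((fps_X)^2) k)" by (rule lowone_poch) auto
  then have "fps_nth (P ((fps_X::'a fps)^2) k) 0 = 1" by (simp add: lowone_def)
  then show ?thesis by (metis fps_zero_nth zero_neq_one)
qed

lemma subset_count:
  assumes "finite S"
  shows "fps_nth (\<Prod>a\<in>S. 1 + (fps_X::'a::comm_semiring_1 fps)^a) n = of_nat (card {T. T \<subseteq> S \<and> \<Sum>T = n})"
  using assms
proof (induction S arbitrary: n rule: finite_induct)
  case empty
  have "{T. T \<subseteq> {} \<and> \<Sum>T = n} = (if n = 0 then {{}} else {})" by auto
  then show ?case by simp
next
  case (insert a S)
  define A where "A m = {T. T \<subseteq> S \<and> \<Sum>T = m}" for m
  have finA: "finite (A m)" for m unfolding A_def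
    by (rule finite_subset[of _ "Pow S"]) (use insert in auto)
  define B where "B = {T. T \<subseteq> insert a S \<and> a \<in> T \<and> \<Sum>T = n}"
  have split: "{T. T \<subseteq> insert a S \<and> \<Sum>T = n} = A n \<union> B"
    unfolding A_def B_def using insert by auto
  have disj: "A n \<inter> B = {}" unfolding A_def B_def using insert by auto
  have finB: "finite B" unfolding B_def
    by (rule finite_subset[of _ "Pow (insert a S)"]) (use insert in auto)
  have cB: "card B = (if a \<le> n then card (A (n-a)) else 0)"
  proof (cases "a \<le> n")
    case True
    have "B = insert a ` A (n-a)"
    proof
      show "B \<subseteq> insert a ` A (n-a)"
      proof
        fix T assume T: "T \<in> B"
        then have fT: "finite T" using insert unfolding B_def by (auto intro: finite_subset)
        have "T - {a} \<in> A (n-a)" using T fT insert unfolding A_def B_def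
          by (auto simp: sum_diff1_nat)
        moreover have "T = insert a (T - {a})" using T unfolding B_def by auto
        ultimately show "T \<in> insert a ` A (n-a)" by blast
      qed
      show "insert a ` A (n-a) \<subseteq> B"
      proof
        fix T assume "T \<in> insert a ` A (n-a)"
        then obtain U where U: "U \<in> A (n-a)" "T = insert a U" by blast
        have fU: "finite U" using U insert unfolding A_def by (auto intro: finite_subset)
        have "a \<notin> U" using U insert unfolding A_def by auto
        then show "T \<in> B" using U fU True insert unfolding A_def B_def by auto
      qed
    qed
    moreover have "inj_on (insert a) (A (n-a))"
    proof (rule inj_onI)
      fix x y assume xy: "x \<in> A (n-a)" "y \<in> A (n-a)" "insert a x = insert a y"
      have "a \<notin> x" "a \<notin> y" using xy insert unfolding A_def by auto
      then show "x = y" using xy(3) by (metis Diff_insert_absorb)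
    qed
    ultimately show ?thesis using True by (simp add: card_image)
  next
    case False
    have "B = {}"
    proof (rule ccontr)
      assume "B \<noteq> {}"
      then obtain T where T: "T \<in> B" by blast
      then have "finite T" using insert unfolding B_def by (auto intro: finite_subset)
      then have "a \<le> \<Sum>T" using T unfolding B_def by (intro member_le_sum) auto
      then show False using T False unfolding B_def by auto
    qed
    then show ?thesis using False by simp
  qed
  have "fps_nth (\<Prod>x\<in>insert a S. 1 + (fps_X::'a fps)^x) n = fps_nth ((1 + fps_X^a) * (\<Prod>x\<in>S. 1 + fps_X^x)) n"
    using insert by simp
  also have "\<dots> = fps_nth (\<Prod>x\<in>S. 1 + (fps_X::'a fps)^x) n + fps_nth (fps_X^a * (\<Prod>x\<in>S. 1 + fps_X^x)) n"
    by (simp add: distrib_right)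
  also have "\<dots> = of_nat (card (A n)) + (if a \<le> n then of_nat (card (A (n-a))) else 0)"
    unfolding fps_X_power_mult_nth using insert.IH by (auto simp: A_def)
  also have "\<dots> = of_nat (card (A n) + card B)" using cB by simp
  also have "card (A n) + card B = card (A n \<union> B)" using disj finA finB by (simp add: card_Un_disjoint)
  finally show ?case using split by simp
qed


definition OddS :: "nat \<Rightarrow> nat set" where "OddS j = {x. odd x \<and> x < 2*j}"
definition EvS :: "nat \<Rightarrow> nat \<Rightarrow> nat set" where "EvS N j = {x. even x \<and> 4*j+2 \<le> x \<and> x \<le> 4*N}"
definition SS :: "nat \<Rightarrow> nat \<Rightarrow> nat set" where "SS N j = OddS j \<union> EvS N j"
definition Dm :: "nat \<Rightarrow> nat multiset" where "Dm j = (\<Sum>i<j. replicate_mset 2 (2*i+1))"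

definition good :: "nat \<Rightarrow> nat multiset \<Rightarrow> bool" where
  "good j M \<longleftrightarrow> {x \<in> set_mset M. odd x} = OddS j \<and>
      (\<forall>x\<in>#M. odd x \<longrightarrow> count M x = 2 \<or> count M x = 3) \<and>
      (\<forall>x\<in>#M. even x \<longrightarrow> count M x = 1 \<and> 4*j + 2 \<le> x)"

lemma OddS_Suc: "OddS (Suc j) = insert (2*j+1) (OddS j)"
  unfolding OddS_def by (auto elim: oddE)

lemma count_Dm: "count (Dm j) x = (if x \<in> OddS j then 2 else 0)"
proof (induction j)
  case 0 then show ?case by (simp add: Dm_def OddS_def)
next
  case (Suc j)
  have "Dm (Suc j) = Dm j + replicate_mset 2 (2*j+1)" by (simp add: Dm_def)
  moreover have "2*j+1 \<notin> OddS j" by (simp add: OddS_def)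
  ultimately show ?case using Suc by (auto simp: OddS_Suc)
qed

lemma sum_Dm: "sum_mset (Dm j) = 2*j^2"
proof (induction j)
  case 0 then show ?case by (simp add: Dm_def)
next
  case (Suc j)
  have "Dm (Suc j) = Dm j + replicate_mset 2 (2*j+1)" by (simp add: Dm_def)
  then show ?case using Suc by (simp add: power2_eq_square algebra_simps)
qed

lemma finite_SS: "finite (SS N j)"
proof (rule finite_subset[of _ "{..4*N+2*j}"])
  show "SS N j \<subseteq> {..4*N+2*j}" unfolding SS_def OddS_def EvS_def by auto
qed simp

lemma mem_le_sum: "x \<in># M \<Longrightarrow> x \<le> sum_mset (M::nat multiset)"
proof -
  assume "x \<in># M"
  then obtain M' where "M = add_mset x M'" by (blast dest: multi_member_split)
  then show ?thesis by simp
qed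

lemma sum_mset_set: "finite T \<Longrightarrow> sum_mset (mset_set T) = \<Sum>T"
  by (induction T rule: finite_induct) auto

lemma decomp:
  assumes part: "is_partition n M" and g: "good j M" and nN: "n \<le> 4*N"
  shows "M = mset_set {x. odd (count M x)} + Dm j" and "{x. odd (count M x)} \<subseteq> SS N j"
proof -
  define T where "T = {x. odd (count M x)}"
  have Tsub: "T \<subseteq> set_mset M"
  proof
    fix x assume "x \<in> T"
    then have "count M x \<noteq> 0" unfolding T_def by (metis CollectD odd_pos not_gr0)
    then show "x \<in> set_mset M" by (metis count_eq_zero_iff)
  qed
  then have fT: "finite T" by (rule finite_subset) simp
  have gs: "{x \<in> set_mset M. odd x} = OddS j"
    and g2: "\<And>x. x\<in>#M \<Longrightarrow> odd x \<Longrightarrow> count M x = 2 \<or> count M x = 3"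
    and g3: "\<And>x. x\<in>#M \<Longrightarrow> even x \<Longrightarrow> count M x = 1 \<and> 4*j + 2 \<le> x"
    using g unfolding good_def by auto
  show "M = mset_set {x. odd (count M x)} + Dm j"
  proof (rule multiset_eqI)
    fix x
    show "count M x = count (mset_set {x. odd (count M x)} + Dm j) x"
    proof (cases "odd x")
      case True
      show ?thesis
      proof (cases "x \<in> OddS j")
        case True
        then have "x \<in># M" using gs by auto
        then have "count M x = 2 \<or> count M x = 3" using g2 \<open>odd x\<close> by auto
        then show ?thesis using True fT unfolding T_def[symmetric]
          by (auto simp: count_Dm T_def)
      next
        case False
        then have "x \<notin># M" using gs \<open>odd x\<close> by auto
        then show ?thesis using False by (simp add: count_Dm not_in_iff)
      qed
    next
      case False
      then have xo: "x \<notin> OddS j" by (simp add: OddS_def)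
      show ?thesis
      proof (cases "x \<in># M")
        case True
        then have "count M x = 1" using g3 False by auto
        then show ?thesis using fT xo unfolding T_def[symmetric] by (simp add: count_Dm T_def)
      next
        case False
        then show ?thesis using xo by (simp add: count_Dm not_in_iff)
      qed
    qed
  qed
  show "{x. odd (count M x)} \<subseteq> SS N j"
  proof
    fix x assume x: "x \<in> {x. odd (count M x)}"
    then have xm: "x \<in># M" using Tsub T_def by auto
    show "x \<in> SS N j"
    proof (cases "odd x")
      case True then show ?thesis using gs xm by (auto simp: SS_def)
    next
      case False
      have "x \<le> n" using mem_le_sum[OF xm] part by (simp add: is_partition_def)
      have "count M x = 1 \<and> 4*j + 2 \<le> x" using g3[OF xm] False by simp
      then show ?thesis using False nN \<open>x \<le> n\<close> by (auto simp: SS_def EvS_def)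
    qed
  qed
qed

lemma recomp:
  assumes TS: "T \<subseteq> SS N j" and sT: "\<Sum>T + 2*j^2 = n"
  shows "is_partition n (mset_set T + Dm j)" "good j (mset_set T + Dm j)"
    "{x. odd (count (mset_set T + Dm j) x)} = T"
proof -
  have fT: "finite T" using TS finite_SS by (rule finite_subset)
  define M where "M = mset_set T + Dm j"
  have cM: "count M x = (if x \<in> T then 1 else 0) + (if x \<in> OddS j then 2 else 0)" for x
    unfolding M_def using fT by (simp add: count_Dm)
  have sM: "set_mset M = T \<union> OddS j"
  proof -
    have "x \<in># M \<longleftrightarrow> x \<in> T \<union> OddS j" for x
    proof -
      have "x \<in># M \<longleftrightarrow> 0 < count M x" by simp
      also have "\<dots> \<longleftrightarrow> x \<in> T \<union> OddS j" unfolding cM by simp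
      finally show ?thesis .
    qed
    then show ?thesis by blast
  qed
  have oddT: "x \<in> OddS j" if "x \<in> T" "odd x" for x
  proof -
    have "x \<in> OddS j \<or> x \<in> EvS N j" using TS that(1) unfolding SS_def by blast
    moreover have "x \<notin> EvS N j" using that(2) unfolding EvS_def by blast
    ultimately show ?thesis by blast
  qed
  have evT: "4*j+2 \<le> x" if "x \<in> T" "even x" for x
  proof -
    have "x \<in> OddS j \<or> x \<in> EvS N j" using TS that(1) unfolding SS_def by blast
    moreover have "x \<notin> OddS j" using that(2) unfolding OddS_def by blast
    ultimately show ?thesis unfolding EvS_def by blast
  qed
  have pos: "0 < x" if "x \<in> T \<union> OddS j" for x
  proof (cases "odd x")
    case True then show ?thesis using odd_pos by blast
  next
    case False
    then have "x \<in> T" using that unfolding OddS_def by blast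
    then show ?thesis using evT False by fastforce
  qed
  show "is_partition n (mset_set T + Dm j)"
    unfolding is_partition_def M_def[symmetric]
  proof
    show "\<forall>x\<in>#M. 0 < x" using sM pos by auto
    show "sum_mset M = n" unfolding M_def using sT fT by (simp add: sum_Dm sum_mset_set)
  qed
  show "good j (mset_set T + Dm j)"
    unfolding good_def M_def[symmetric]
  proof (intro conjI ballI impI)
    show "{x \<in> set_mset M. odd x} = OddS j" using sM oddT by (auto simp: OddS_def)
  next
    fix x assume "x \<in># M" "odd x"
    then have "x \<in> OddS j" using sM oddT by auto
    then show "count M x = 2 \<or> count M x = 3" using cM by auto
  next
    fix x assume "x \<in># M" "even x"
    then have "x \<notin> OddS j" by (auto simp: OddS_def)
    then have "x \<in> T" using sM \<open>x \<in># M\<close> by auto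
    then show "count M x = 1" using cM \<open>x \<notin> OddS j\<close> by auto
  next
    fix x assume "x \<in># M" "even x"
    then have "x \<notin> OddS j" by (auto simp: OddS_def)
    then have "x \<in> T" using sM \<open>x \<in># M\<close> by auto
    then show "4*j+2 \<le> x" using evT \<open>even x\<close> by auto
  qed
  show "{x. odd (count (mset_set T + Dm j) x)} = T"
    using cM unfolding M_def[symmetric] by auto
qed

lemma bij_good:
  assumes nN: "n \<le> 4*N"
  shows "bij_betw (\<lambda>T. mset_set T + Dm j) {T. T \<subseteq> SS N j \<and> \<Sum>T + 2*j^2 = n}
           {M. is_partition n M \<and> good j M}"
proof (rule bij_betw_byWitness[where f'="\<lambda>M. {x. odd (count M x)}"])
  show "\<forall>T\<in>{T. T \<subseteq> SS N j \<and> \<Sum>T + 2*j^2 = n}. {x. odd (count (mset_set T + Dm j) x)} = T"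
    using recomp(3) by blast
  show "\<forall>M\<in>{M. is_partition n M \<and> good j M}. mset_set {x. odd (count M x)} + Dm j = M"
    using decomp(1)[OF _ _ nN] by auto
  show "(\<lambda>T. mset_set T + Dm j) ` {T. T \<subseteq> SS N j \<and> \<Sum>T + 2*j^2 = n} \<subseteq> {M. is_partition n M \<and> good j M}"
    using recomp(1,2) by blast
  show "(\<lambda>M. {x. odd (count M x)}) ` {M. is_partition n M \<and> good j M} \<subseteq> {T. T \<subseteq> SS N j \<and> \<Sum>T + 2*j^2 = n}"
  proof clarify
    fix M assume pm: "is_partition n M" "good j M"
    have e: "M = mset_set {x. odd (count M x)} + Dm j" and s: "{x. odd (count M x)} \<subseteq> SS N j"
      using decomp[OF pm nN] by auto
    have f: "finite {x. odd (count M x)}" using s finite_SS by (rule finite_subset)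
    have "n = sum_mset M" using pm by (simp add: is_partition_def)
    also have "\<dots> = \<Sum>{x. odd (count M x)} + 2*j^2"
      by (subst e) (simp add: sum_Dm sum_mset_set[OF f])
    finally show "{x. odd (count M x)} \<subseteq> SS N j \<and> \<Sum>{x. odd (count M x)} + 2*j^2 = n"
      using s by simp
  qed
qed


lemma card_good:
  assumes nN: "n \<le> 4*N"
  shows "card {M. is_partition n M \<and> good j M} =
     (if 2*j^2 \<le> n then card {T. T \<subseteq> SS N j \<and> \<Sum>T = n - 2*j^2} else 0)"
proof -
  have "card {M. is_partition n M \<and> good j M} = card {T. T \<subseteq> SS N j \<and> \<Sum>T + 2*j^2 = n}"
    using bij_betw_same_card[OF bij_good[OF nN]] by simp
  also have "{T. T \<subseteq> SS N j \<and> \<Sum>T + 2*j^2 = n} =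
     (if 2*j^2 \<le> n then {T. T \<subseteq> SS N j \<and> \<Sum>T = n - 2*j^2} else {})"
    by (cases "2*j^2 \<le> n") auto
  finally show ?thesis by simp
qed

lemma finite_good:
  assumes nN: "n \<le> 4*N"
  shows "finite {M. is_partition n M \<and> good j M}"
proof -
  have "finite {T. T \<subseteq> SS N j \<and> \<Sum>T + 2*j^2 = n}"
    by (rule finite_subset[of _ "Pow (SS N j)"]) (use finite_SS in auto)
  then show ?thesis using bij_betw_finite[OF bij_good[OF nN]] by simp
qed

lemma good_bound:
  assumes "is_partition n M" "good j M"
  shows "j \<le> n"
proof -
  have nN: "n \<le> 4*n" by simp
  have e: "M = mset_set {x. odd (count M x)} + Dm j" and s: "{x. odd (count M x)} \<subseteq> SS n j"
    using decomp[OF assms nN] by auto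
  have "n = sum_mset M" using assms by (simp add: is_partition_def)
  also have "\<dots> \<ge> sum_mset (Dm j)" by (subst e) simp
  finally have "2*j^2 \<le> n" by (simp add: sum_Dm)
  moreover have "j \<le> 2*j^2" by (simp add: power2_eq_square)
  ultimately show ?thesis by linarith
qed

lemma good_unique: "good j M \<Longrightarrow> good k M \<Longrightarrow> j = k"
proof -
  assume "good j M" "good k M"
  then have e: "OddS j = OddS k" unfolding good_def by auto
  show "j = k"
  proof (rule ccontr)
    assume "j \<noteq> k"
    then have "j < k \<or> k < j" by auto
    then show False
    proof
      assume "j < k"
      then have "2*j+1 \<in> OddS k" "2*j+1 \<notin> OddS j" by (auto simp: OddS_def)
      then show False using e by simp
    next
      assume "k < j"
      then have "2*k+1 \<in> OddS j" "2*k+1 \<notin> OddS k" by (auto simp: OddS_def)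
      then show False using e by simp
    qed
  qed
qed

lemma condA_good:
  assumes "is_partition n M"
  shows "c5_condA M \<longleftrightarrow> good 0 M"
proof
  assume a: "c5_condA M"
  have ev: "\<And>x. x \<in># M \<Longrightarrow> even x" and c1: "\<And>x. count M x \<le> 1"
    using a unfolding c5_condA_def by auto
  have pos: "\<And>x. x \<in># M \<Longrightarrow> 0 < x" using assms unfolding is_partition_def by auto
  show "good 0 M" unfolding good_def
  proof (intro conjI ballI impI)
    show "{x \<in> set_mset M. odd x} = OddS 0" using ev by (auto simp: OddS_def)
  next
    fix x assume "x \<in># M" "odd x" then show "count M x = 2 \<or> count M x = 3" using ev by blast
  next
    fix x assume "x \<in># M" "even x"
    then have "0 < count M x" by simp
    then show "count M x = 1" using c1[of x] by linarith
  next
    fix x assume x: "x \<in># M" "even x"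
    then have "0 < x" using pos by blast
    with x(2) show "4*0+2 \<le> x" by presburger
  qed
next
  assume g: "good 0 M"
  then have no: "{x \<in> set_mset M. odd x} = {}" unfolding good_def by (simp add: OddS_def)
  have ev: "\<And>x. x \<in># M \<Longrightarrow> even x" using no by blast
  have c: "\<And>x. x \<in># M \<Longrightarrow> count M x = 1" using g ev unfolding good_def by blast
  show "c5_condA M" unfolding c5_condA_def
  proof (intro conjI allI ballI)
    fix x assume "x \<in># M" then show "even x" using ev by blast
  next
    fix x show "count M x \<le> 1"
      by (cases "x \<in># M") (simp_all add: c not_in_iff)
  qed
qed

lemma oddset: "{2*i - 1 | i. 1 \<le> i \<and> i \<le> j} = OddS j"
proof
  show "{2*i - 1 | i. 1 \<le> i \<and> i \<le> j} \<subseteq> OddS j"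
  proof clarify
    fix i assume "1 \<le> i" "i \<le> (j::nat)"
    then obtain k where "i = Suc k" by (cases i) auto
    then show "2*i - 1 \<in> OddS j" using \<open>i \<le> j\<close> by (simp add: OddS_def)
  qed
  show "OddS j \<subseteq> {2*i - 1 | i. 1 \<le> i \<and> i \<le> j}"
  proof
    fix x assume "x \<in> OddS j"
    then have x: "odd x" "x < 2*j" by (auto simp: OddS_def)
    then obtain k where k: "x = 2*k+1" by (blast elim: oddE)
    then have "x = 2*(k+1) - 1" "1 \<le> k+1" "k+1 \<le> j" using x by auto
    then show "x \<in> {2*i - 1 | i. 1 \<le> i \<and> i \<le> j}" by blast
  qed
qed

lemma condB_good: "c5_condB M \<longleftrightarrow> (\<exists>j. 1 \<le> j \<and> good j M)"
  unfolding c5_condB_def good_def oddset ..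

lemma c5_sum:
  assumes nN: "n \<le> N"
  shows "c5 n = (\<Sum>j\<le>N. card {M. is_partition n M \<and> good j M})"
proof -
  have n4: "n \<le> 4*N" using nN by simp
  have eq: "{M. is_partition n M \<and> (c5_condA M \<or> c5_condB M)} = (\<Union>j\<le>N. {M. is_partition n M \<and> good j M})"
  proof (intro equalityI subsetI)
    fix M assume "M \<in> {M. is_partition n M \<and> (c5_condA M \<or> c5_condB M)}"
    then have p: "is_partition n M" and ab: "c5_condA M \<or> c5_condB M" by auto
    then obtain j where "good j M" using condA_good[OF p] condB_good by blast
    moreover have "j \<le> N" using good_bound[OF p \<open>good j M\<close>] nN by simp
    ultimately show "M \<in> (\<Union>j\<le>N. {M. is_partition n M \<and> good j M})" using p by blast
  next
    fix M assume "M \<in> (\<Union>j\<le>N. {M. is_partition n M \<and> good j M})"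
    then obtain j where p: "is_partition n M" and g: "good j M" by blast
    show "M \<in> {M. is_partition n M \<and> (c5_condA M \<or> c5_condB M)}"
    proof (cases "j = 0")
      case True then show ?thesis using p g condA_good[OF p] by simp
    next
      case False then show ?thesis using p g condB_good by auto
    qed
  qed
  have "c5 n = card (\<Union>j\<le>N. {M. is_partition n M \<and> good j M})"
    unfolding c5_def eq ..
  also have "\<dots> = (\<Sum>j\<le>N. card {M. is_partition n M \<and> good j M})"
  proof (rule card_UN_disjoint)
    show "finite {..N}" by simp
    show "\<forall>j\<in>{..N}. finite {M. is_partition n M \<and> good j M}" using finite_good[OF n4] by blast
    show "\<forall>i\<in>{..N}. \<forall>j\<in>{..N}. i \<noteq> j \<longrightarrow> {M. is_partition n M \<and> good i M} \<inter> {M. is_partition n M \<and> good j M} = {}"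
      using good_unique by blast
  qed
  finally show ?thesis .
qed



lemma one_minus_bit: "(1::bit fps) - a = 1 + a"
proof -
  have "- a = a" by (rule char2_neg[OF two_bit_fps])
  then show ?thesis by (simp only: diff_conv_add_uminus)
qed

lemma img_odd: "(\<lambda>i. 1 + 2*i) ` {..<j} = OddS j"
proof
  show "(\<lambda>i. 1 + 2*i) ` {..<j} \<subseteq> OddS j" by (auto simp: OddS_def)
  show "OddS j \<subseteq> (\<lambda>i. 1 + 2*i) ` {..<j}"
  proof
    fix x assume "x \<in> OddS j"
    then have x: "odd x" "x < 2*j" by (auto simp: OddS_def)
    then obtain k where "x = 2*k+1" by (blast elim: oddE)
    then show "x \<in> (\<lambda>i. 1 + 2*i) ` {..<j}" using x by (intro image_eqI[of _ _ k]) auto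
  qed
qed

lemma img_ev: "j \<le> N \<Longrightarrow> (\<lambda>i. (4*j+2) + 2*i) ` {..<2*N-2*j} = EvS N j"
proof
  assume jN: "j \<le> N"
  show "(\<lambda>i. (4*j+2) + 2*i) ` {..<2*N-2*j} \<subseteq> EvS N j" using jN by (auto simp: EvS_def)
  show "EvS N j \<subseteq> (\<lambda>i. (4*j+2) + 2*i) ` {..<2*N-2*j}"
  proof
    fix x assume "x \<in> EvS N j"
    then have x: "even x" "4*j+2 \<le> x" "x \<le> 4*N" by (auto simp: EvS_def)
    then obtain k where k: "x = 2*k" by (blast elim: evenE)
    define i where "i = k - (2*j+1)"
    have "x = (4*j+2) + 2*i" "i < 2*N-2*j" using x k unfolding i_def by auto
    then show "x \<in> (\<lambda>i. (4*j+2) + 2*i) ` {..<2*N-2*j}" by blast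
  qed
qed

lemma poch_prod_set:
  "poch ((fps_X::bit fps)^2) ((fps_X::bit fps)^k) m = (\<Prod>a\<in>(\<lambda>i. k + 2*i) ` {..<m}. 1 + (fps_X::bit fps)^a)"
proof -
  have inj: "inj_on (\<lambda>i. k + 2*i) {..<m}" by (simp add: inj_on_def)
  have "poch ((fps_X::bit fps)^2) ((fps_X::bit fps)^k) m = (\<Prod>i<m. 1 + (fps_X::bit fps)^(k+2*i))"
    by (simp add: poch_X one_minus_bit)
  also have "\<dots> = (\<Prod>a\<in>(\<lambda>i. k + 2*i) ` {..<m}. 1 + (fps_X::bit fps)^a)"
    by (simp add: prod.reindex[OF inj] o_def)
  finally show ?thesis .
qed

lemma prod_j:
  assumes jN: "j \<le> N"
  shows "poch ((fps_X::bit fps)^2) (fps_X::bit fps) j * poch ((fps_X::bit fps)^2) (((fps_X::bit fps)^2)^(2*j+1)) (2*N-2*j) = (\<Prod>a\<in>SS N j. 1 + (fps_X::bit fps)^a)"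
proof -
  have a: "poch ((fps_X::bit fps)^2) (fps_X::bit fps) j = (\<Prod>a\<in>OddS j. 1 + (fps_X::bit fps)^a)"
    using poch_prod_set[of 1 j] img_odd[of j] by simp
  have b: "poch ((fps_X::bit fps)^2) (((fps_X::bit fps)^2)^(2*j+1)) (2*N-2*j) = (\<Prod>a\<in>EvS N j. 1 + (fps_X::bit fps)^a)"
  proof -
    have "((fps_X::bit fps)^2)^(2*j+1) = (fps_X::bit fps)^(2*(2*j+1))" by (rule power_mult[symmetric])
    also have "2*(2*j+1) = 4*j+2" by simp
    finally have "((fps_X::bit fps)^2)^(2*j+1) = (fps_X::bit fps)^(4*j+2)" .
    then show ?thesis
      using poch_prod_set[of "4*j+2" "2*N-2*j"] img_ev[OF jN] by simp
  qed
  have d: "OddS j \<inter> EvS N j = {}" by (auto simp: OddS_def EvS_def)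
  have f: "finite (OddS j)" "finite (EvS N j)" using finite_SS[of N j] by (auto simp: SS_def)
  show ?thesis unfolding a b SS_def by (rule prod.union_disjoint[OF f d, symmetric])
qed

lemma lhs_coeff:
  assumes jN: "j \<le> N" and nN: "n \<le> N"
  shows "fps_nth (((fps_X::bit fps)^2)^(j^2) * poch ((fps_X::bit fps)^2) (fps_X::bit fps) j * XX ((fps_X::bit fps)^2) N j) n =
     (if 2*j^2 \<le> n then of_nat (card {T. T \<subseteq> SS N j \<and> \<Sum>T = n - 2*j^2}) else 0)"
proof -
  define B where "B = poch ((fps_X::bit fps)^2) (((fps_X::bit fps)^2)^(N-j+1)) j"
  have eq: "((fps_X::bit fps)^2)^(j^2) * poch ((fps_X::bit fps)^2) (fps_X::bit fps) j * XX ((fps_X::bit fps)^2) N j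
      = ((fps_X::bit fps)^(2*j^2) * (\<Prod>a\<in>SS N j. 1 + (fps_X::bit fps)^a)) * B"
    unfolding XX_def B_def prod_j[OF jN, symmetric] by (simp add: power_mult[symmetric] algebra_simps)
  show ?thesis
  proof (cases "2*j^2 \<le> n")
    case False
    have "fps_nth (((fps_X::bit fps)^(2*j^2) * (\<Prod>a\<in>SS N j. 1 + (fps_X::bit fps)^a)) * B) n = 0"
      unfolding mult.assoc fps_X_power_mult_nth using False by simp
    then show ?thesis unfolding eq using False by simp
  next
    case True
    have "2*j \<le> n"
    proof (cases "j = 0")
      case False then have "j \<le> j^2" by (simp add: power2_eq_square)
      then show ?thesis using True by linarith
    qed simp
    then have low: "lowone (Suc n) B"
      unfolding B_def using nN
      by (subst power_mult[symmetric]) (rule lowone_poch; simp)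
    have "fps_nth (((fps_X::bit fps)^(2*j^2) * (\<Prod>a\<in>SS N j. 1 + (fps_X::bit fps)^a)) * B) n
       = of_nat (card {T. T \<subseteq> SS N j \<and> \<Sum>T = n - 2*j^2})"
      unfolding lowone_coeff[OF low] fps_X_power_mult_nth using True
      by (simp add: subset_count[OF finite_SS])
    then show ?thesis unfolding eq using True by simp
  qed
qed

lemma abs_le_sq: "\<bar>r::int\<bar> \<le> r^2"
proof (cases "r = 0")
  case False
  then have "1 \<le> \<bar>r\<bar>" by simp
  then have "\<bar>r\<bar> * 1 \<le> \<bar>r\<bar> * \<bar>r\<bar>" by (intro mult_left_mono) auto
  then show ?thesis by (simp add: power2_eq_square abs_mult_self_eq)
qed simp

lemma rhs_coeff:
  assumes rN: "\<bar>r\<bar> \<le> int N" and nN: "n \<le> N"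
  shows "fps_nth ((fps_X::bit fps)^nat(E r) * (((fps_X::bit fps)^2)^((nat \<bar>r\<bar>)^2) * YY ((fps_X::bit fps)^2) N (nat \<bar>r\<bar>))) n =
     (if 2 * int n = 7*r^2 - r then 1 else 0)"
proof -
  define s where "s = nat \<bar>r\<bar>"
  have sN: "s \<le> N" using rN unfolding s_def by simp
  have eq: "(fps_X::bit fps)^nat(E r) * (((fps_X::bit fps)^2)^(s^2) * YY ((fps_X::bit fps)^2) N s) = (fps_X::bit fps)^(nat(E r) + 2*s^2) * YY ((fps_X::bit fps)^2) N s"
    by (simp add: power_add power_mult[symmetric] algebra_simps)
  have ex: "int (nat (E r) + 2*s^2) = (7*r^2 - r) div 2"
  proof -
    have "int s = \<bar>r\<bar>" unfolding s_def by simp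
    then have "int (s^2) = r^2" by simp
    moreover have "int (nat (E r)) = E r" using E_nonneg by simp
    moreover have "2 * E r = r*(3*r-1)" by (rule E2)
    ultimately show ?thesis by (simp add: power2_eq_square algebra_simps)
  qed
  have cond: "(nat(E r) + 2*s^2 = n) \<longleftrightarrow> 2 * int n = 7*r^2 - r"
  proof -
    have "2 * E r = r*(3*r-1)" by (rule E2)
    then have ev: "7*r^2 - r = 2 * ((7*r^2 - r) div 2)" by (simp add: power2_eq_square algebra_simps)
    show ?thesis using ex ev by (metis of_nat_eq_iff mult_cancel_left zero_neq_numeral)
  qed
  show ?thesis
  proof (cases "nat(E r) + 2*s^2 \<le> n")
    case False
    then have "nat(E r) + 2*s^2 \<noteq> n" by simp
    then show ?thesis using False cond unfolding s_def[symmetric] eq fps_X_power_mult_nth by auto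
  next
    case True
    have "2*s \<le> n"
    proof (cases "s = 0")
      case False then have "s \<le> s^2" by (simp add: power2_eq_square)
      then show ?thesis using True by linarith
    qed simp
    then have l2: "lowone (Suc n) (poch ((fps_X::bit fps)^2) (((fps_X::bit fps)^2)^(N-s+1)) s)"
      using nN sN by (subst power_mult[symmetric]) (rule lowone_poch; simp)
    have l1: "lowone (Suc n) (poch ((fps_X::bit fps)^2) (((fps_X::bit fps)^2)^(N+s+1)) (N-s))"
      using nN sN by (subst power_mult[symmetric]) (rule lowone_poch; simp)
    have low: "lowone (Suc n) (YY ((fps_X::bit fps)^2) N s)"
      unfolding YY_def by (rule lowone_mult[OF l1 l2])
    have "fps_nth ((fps_X::bit fps)^(nat(E r)+2*s^2)) n = (if nat(E r)+2*s^2 = n then 1 else 0)" by auto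
    also have "\<dots> = (if 2 * int n = 7*r^2 - r then 1 else 0)" by (simp only: cond)
    finally show ?thesis unfolding s_def[symmetric] eq lowone_coeff[OF low] .
  qed
qed

lemma sol_unique: "7*r^2 - r = 7*r'^2 - (r'::int) \<Longrightarrow> r = r'"
proof (rule ccontr)
  assume e: "7*r^2 - r = 7*r'^2 - r'" and ne: "r \<noteq> r'"
  have "(r - r') * (7*(r+r') - 1) = 0" using e by (simp add: power2_eq_square algebra_simps)
  then have "7*(r+r') = 1" using ne by simp
  then show False by presburger
qed

lemma rhs_sum:
  assumes N: "N = 2*n+1"
  shows "(\<Sum>r\<in>{-int N..int N}. (if 2 * int n = 7*r^2 - r then 1 else 0 :: bit))
       = (if \<exists>j::int. 2 * int n = 7*j^2 + j then 1 else 0)"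
proof (cases "\<exists>r::int. 2 * int n = 7*r^2 - r")
  case True
  then obtain r0 where r0: "2 * int n = 7*r0^2 - r0" by blast
  have "\<bar>r0\<bar> \<le> 2 * int n"
  proof -
    have "\<bar>r0\<bar> \<le> r0^2" by (rule abs_le_sq)
    then show ?thesis using r0 by linarith
  qed
  then have inr: "r0 \<in> {-int N..int N}" using N by auto
  have "(\<Sum>r\<in>{-int N..int N}. (if 2 * int n = 7*r^2 - r then 1 else 0 :: bit))
      = (\<Sum>r\<in>{-int N..int N}. (if r = r0 then 1 else 0))"
  proof (rule sum.cong)
    fix r
    have "(2 * int n = 7*r^2 - r) \<longleftrightarrow> r = r0"
    proof
      assume "2 * int n = 7*r^2 - r"
      then have "7*r^2 - r = 7*r0^2 - r0" using r0 by simp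
      then show "r = r0" by (rule sol_unique)
    next
      assume "r = r0" then show "2 * int n = 7*r^2 - r" using r0 by simp
    qed
    then show "(if 2 * int n = 7*r^2 - r then 1 else 0 :: bit) = (if r = r0 then 1 else 0)" by simp
  qed simp
  also have "\<dots> = 1" using inr by simp
  finally have s1: "(\<Sum>r\<in>{-int N..int N}. (if 2 * int n = 7*r^2 - r then 1 else 0 :: bit)) = 1" .
  have "\<exists>j::int. 2 * int n = 7*j^2 + j" by (rule exI[of _ "-r0"]) (use r0 in simp)
  then show ?thesis using s1 by simp
next
  case False
  have "\<not> (\<exists>j::int. 2 * int n = 7*j^2 + j)"
  proof
    assume "\<exists>j::int. 2 * int n = 7*j^2 + j"
    then obtain j where "2 * int n = 7*j^2 + j" by blast
    then have "2 * int n = 7*(-j)^2 - (-j)" by simp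
    with False show False by blast
  qed
  then show ?thesis using False by simp
qed

theorem main:
  "odd (c5 n) \<longleftrightarrow> (\<exists>j::int. 2 * int n = 7 * j^2 + j)"
proof -
  define N where "N = 2*n+1"
  have nN: "n \<le> N" unfolding N_def by simp
  have n4: "n \<le> 4*N" unfolding N_def by simp
  note FB = finite_bailey[OF two_bit_fps P_X_nz, of N]
  have L: "fps_nth (\<Sum>j\<le>N. ((fps_X::bit fps)^2)^(j^2) * poch ((fps_X::bit fps)^2) (fps_X::bit fps) j * XX ((fps_X::bit fps)^2) N j) n = of_nat (c5 n)"
  proof -
    have "fps_nth (\<Sum>j\<le>N. ((fps_X::bit fps)^2)^(j^2) * poch ((fps_X::bit fps)^2) (fps_X::bit fps) j * XX ((fps_X::bit fps)^2) N j) n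
        = (\<Sum>j\<le>N. of_nat (card {M. is_partition n M \<and> good j M}))"
      unfolding fps_sum_nth
      using card_good[OF n4] by (intro sum.cong) (simp_all add: lhs_coeff nN)
    also have "\<dots> = of_nat (c5 n)" using c5_sum[OF nN] by simp
    finally show ?thesis .
  qed
  have R: "fps_nth (\<Sum>r\<in>{-int N..int N}. (fps_X::bit fps)^nat(E r) * (((fps_X::bit fps)^2)^((nat \<bar>r\<bar>)^2) * YY ((fps_X::bit fps)^2) N (nat \<bar>r\<bar>))) n
      = (if \<exists>j::int. 2 * int n = 7*j^2 + j then 1 else 0)"
    unfolding fps_sum_nth
    by (subst rhs_sum[OF N_def, symmetric], rule sum.cong) (auto simp: rhs_coeff nN)
  have "(of_nat (c5 n) :: bit) = (if \<exists>j::int. 2 * int n = 7*j^2 + j then 1 else 0)"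
    using L R FB by simp
  then have eq: "(if odd (c5 n) then 1 else 0 :: bit) = (if \<exists>j::int. 2 * int n = 7*j^2 + j then 1 else 0)"
    by (simp add: of_nat_bit)
  show ?thesis
  proof (cases "\<exists>j::int. 2 * int n = 7*j^2 + j")
    case True
    then have "odd (c5 n)" using eq by (metis one_neq_zero)
    then show ?thesis using True by blast
  next
    case False
    then have "\<not> odd (c5 n)" using eq by (metis one_neq_zero)
    then show ?thesis using False by blast
  qed
qed


theorem theorem6:
  fixes n :: nat
  shows "odd (c5 n) \<longleftrightarrow> (\<exists>j::int. 2 * int n = 7 * j^2 + j)"
  by (rule main)

end
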